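(* Let $w\in W$ and $\alpha\in\Phi^+\cap w\Phi^-$ with $\ell(\sigma_\alpha w)=\ell(w)-1$. For $\beta\in(\Phi^+\cap w\Phi^-)\setminus\{\alpha\}$ define $\psi(\beta)=\beta-\alpha$ if $(\alpha,\beta)=1$, $\beta-\alpha\in\Phi^+$, and $\beta-\alpha\notin\Phi^+\cap w\Phi^-$; and $\psi(\beta)=\beta$ otherwise. Then $\psi$ is a bijection from $(\Phi^+\cap w\Phi^-)\setminus\{\alpha\}$ onto $\Phi^+\cap(\sigma_\alpha w)\Phi^-$. If moreover $w^{-1}\alpha\in-\Pi$, then $\Phi^+\cap(\sigma_\alpha w)\Phi^-=(\Phi^+\cap w\Phi^-)\setminus\{\alpha\}$.
   Context: $\Phi$ is a simply laced root system with positive roots $\Phi^+$, $\Phi^-=-\Phi^+$, simple roots $\Pi$, Weyl group $W$, length $\ell$, reflections $\sigma_\alpha$; the scalar product is normalized so that $(\alpha,\alpha)=2$ for all roots. *)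

theory Defs
  imports "HOL-Analysis.Analysis"
begin

definition refl :: "'a::real_inner \<Rightarrow> 'a \<Rightarrow> 'a" where
  "refl \<alpha> v = v - (2 * (v \<bullet> \<alpha>) / (\<alpha> \<bullet> \<alpha>)) *\<^sub>R \<alpha>"

definition root_system :: "'a::euclidean_space set \<Rightarrow> bool" where
  "root_system \<Phi> \<longleftrightarrow> finite \<Phi> \<and> 0 \<notin> \<Phi> \<and> span \<Phi> = UNIV
     \<and> (\<forall>\<alpha>\<in>\<Phi>. refl \<alpha> ` \<Phi> = \<Phi>)
     \<and> (\<forall>\<alpha>\<in>\<Phi>. \<forall>c. c *\<^sub>R \<alpha> \<in> \<Phi> \<longrightarrow> c = 1 \<or> c = -1)
     \<and> (\<forall>\<alpha>\<in>\<Phi>. \<forall>\<beta>\<in>\<Phi>. 2 * (\<beta> \<bullet> \<alpha>) / (\<alpha> \<bullet> \<alpha>) \<in> \<int>)"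

definition simply_laced_root_system :: "'a::euclidean_space set \<Rightarrow> bool" where
  "simply_laced_root_system \<Phi> \<longleftrightarrow> root_system \<Phi> \<and> (\<forall>\<alpha>\<in>\<Phi>. \<alpha> \<bullet> \<alpha> = 2)"

definition simple_system :: "'a::euclidean_space set \<Rightarrow> 'a set \<Rightarrow> bool" where
  "simple_system \<Phi> \<Delta> \<longleftrightarrow> \<Delta> \<subseteq> \<Phi> \<and> independent \<Delta>
     \<and> (\<forall>\<beta>\<in>\<Phi>. \<exists>c. (\<forall>\<gamma>\<in>\<Delta>. c \<gamma> \<in> \<int>) \<and> \<beta> = (\<Sum>\<gamma>\<in>\<Delta>. c \<gamma> *\<^sub>R \<gamma>)
                     \<and> ((\<forall>\<gamma>\<in>\<Delta>. c \<gamma> \<ge> 0) \<or> (\<forall>\<gamma>\<in>\<Delta>. c \<gamma> \<le> 0)))"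

definition pos_roots :: "'a::euclidean_space set \<Rightarrow> 'a set \<Rightarrow> 'a set" where
  "pos_roots \<Phi> \<Delta> = {\<beta>\<in>\<Phi>. \<exists>c. (\<forall>\<gamma>\<in>\<Delta>. c \<gamma> \<ge> 0) \<and> \<beta> = (\<Sum>\<gamma>\<in>\<Delta>. c \<gamma> *\<^sub>R \<gamma>)}"

definition neg_roots :: "'a::euclidean_space set \<Rightarrow> 'a set \<Rightarrow> 'a set" where
  "neg_roots \<Phi> \<Delta> = uminus ` pos_roots \<Phi> \<Delta>"

definition refl_prod :: "'a::real_inner list \<Rightarrow> 'a \<Rightarrow> 'a" where
  "refl_prod xs = foldr (\<circ>) (map refl xs) id"

text \<open>Weyl group: the group generated by the reflections \<open>\<sigma>\<^sub>\<alpha>\<close>, \<open>\<alpha> \<in> \<Phi>\<close>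
  (reflections are involutions, so finite products suffice).\<close>
definition weyl_group :: "'a::euclidean_space set \<Rightarrow> ('a \<Rightarrow> 'a) set" where
  "weyl_group \<Phi> = {refl_prod xs | xs. set xs \<subseteq> \<Phi>}"

definition weyl_length :: "'a::euclidean_space set \<Rightarrow> ('a \<Rightarrow> 'a) \<Rightarrow> nat" where
  "weyl_length \<Delta> w = (LEAST n. \<exists>xs. set xs \<subseteq> \<Delta> \<and> length xs = n \<and> w = refl_prod xs)"

end

theory Submission
  imports Defs
begin



lemma refl_refl: "(a::'a::real_inner) \<bullet> a \<noteq> 0 \<Longrightarrow> refl a (refl a v) = v"
  unfolding refl_def by (simp add: inner_diff_left algebra_simps)

lemma refl_inner: "(a::'a::real_inner) \<bullet> a \<noteq> 0 \<Longrightarrow> refl a u \<bullet> refl a v = u \<bullet> v"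
  unfolding refl_def by (simp add: inner_diff_left inner_diff_right algebra_simps inner_commute)

lemma refl_self: "(a::'a::real_inner) \<bullet> a \<noteq> 0 \<Longrightarrow> refl a a = - a"
  unfolding refl_def by (simp add: algebra_simps scaleR_2)

lemma refl_linear: "linear (refl (a::'a::real_inner))"
  unfolding refl_def by (rule linearI) (simp_all add: inner_add_left algebra_simps add_divide_distrib scaleR_add_left)

lemma refl_adj: "(a::'a::real_inner) \<bullet> a \<noteq> 0 \<Longrightarrow> refl a u \<bullet> v = u \<bullet> refl a v"
  unfolding refl_def by (simp add: inner_diff_left inner_diff_right algebra_simps inner_commute)

lemma refl_conj: assumes "(a::'a::real_inner) \<bullet> a \<noteq> 0"
  shows "refl (refl a g) = refl a \<circ> refl g \<circ> refl a"
proof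
  fix v
  have l: "linear (refl a)" by (rule refl_linear)
  have "(refl a \<circ> refl g \<circ> refl a) v = refl a (refl a v) - (2 * (refl a v \<bullet> g) / (g \<bullet> g)) *\<^sub>R refl a g"
    by (simp add: refl_def[of g] linear_diff[OF l] linear_scale[OF l])
  also have "\<dots> = v - (2 * (v \<bullet> refl a g) / (refl a g \<bullet> refl a g)) *\<^sub>R refl a g"
    using assms by (simp add: refl_refl refl_inner refl_adj)
  finally show "refl (refl a g) v = (refl a \<circ> refl g \<circ> refl a) v" by (simp add: refl_def)
qed

lemma rp_Nil[simp]: "refl_prod [] = id" by (simp add: refl_prod_def)
lemma rp_Cons[simp]: "refl_prod (x#xs) = refl x \<circ> refl_prod xs" by (simp add: refl_prod_def)
lemma rp_append: "refl_prod (xs @ ys) = refl_prod xs \<circ> refl_prod ys"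
  by (induction xs) auto

lemma rp_linear: "linear (refl_prod xs)"
proof (induction xs)
  case Nil show ?case using linear_id by (simp add: id_def)
next
  case (Cons x xs) show ?case using linear_compose[OF Cons refl_linear[of x]] by (simp add: comp_def)
qed




locale RS =
  fixes \<Phi> \<Delta> :: "'a::euclidean_space set"
  assumes sl: "simply_laced_root_system \<Phi>"
    and ss: "simple_system \<Phi> \<Delta>"
begin

abbreviation "P \<equiv> pos_roots \<Phi> \<Delta>"
abbreviation "Ng \<equiv> neg_roots \<Phi> \<Delta>"

lemma finPhi: "finite \<Phi>" using sl by (simp add: simply_laced_root_system_def root_system_def)
lemma zero_notin: "0 \<notin> \<Phi>" using sl by (simp add: simply_laced_root_system_def root_system_def)
lemma refl_perm: "a \<in> \<Phi> \<Longrightarrow> refl a ` \<Phi> = \<Phi>" using sl by (simp add: simply_laced_root_system_def root_system_def)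
lemma reduced: "a \<in> \<Phi> \<Longrightarrow> c *\<^sub>R a \<in> \<Phi> \<Longrightarrow> c = 1 \<or> c = -1"
  using sl by (simp add: simply_laced_root_system_def root_system_def)
lemma norm2: "a \<in> \<Phi> \<Longrightarrow> a \<bullet> a = 2" using sl by (simp add: simply_laced_root_system_def)
lemma ip_int: "a \<in> \<Phi> \<Longrightarrow> b \<in> \<Phi> \<Longrightarrow> b \<bullet> a \<in> \<int>"
  using sl norm2[of a] unfolding simply_laced_root_system_def root_system_def by force
lemma Dsub: "\<Delta> \<subseteq> \<Phi>" using ss by (simp add: simple_system_def)
lemma Dind: "independent \<Delta>" using ss by (simp add: simple_system_def)
lemma finD: "finite \<Delta>" using Dsub finPhi finite_subset by blast
lemma decomp: "b \<in> \<Phi> \<Longrightarrow> \<exists>c. b = (\<Sum>\<gamma>\<in>\<Delta>. c \<gamma> *\<^sub>R \<gamma>) \<and> ((\<forall>\<gamma>\<in>\<Delta>. c \<gamma> \<ge> 0) \<or> (\<forall>\<gamma>\<in>\<Delta>. c \<gamma> \<le> 0))"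
  using ss unfolding simple_system_def by blast
lemma Dind0: "(\<Sum>\<gamma>\<in>\<Delta>. e \<gamma> *\<^sub>R \<gamma>) = 0 \<Longrightarrow> g \<in> \<Delta> \<Longrightarrow> e g = 0"
  using Dind independent_explicit by blast

lemma refl_root: "a \<in> \<Phi> \<Longrightarrow> refl a v = v - (v \<bullet> a) *\<^sub>R a"
  by (simp add: refl_def norm2)
lemma nz: "a \<in> \<Phi> \<Longrightarrow> a \<bullet> a \<noteq> 0" using norm2 by simp
lemma refl_in: "a \<in> \<Phi> \<Longrightarrow> b \<in> \<Phi> \<Longrightarrow> refl a b \<in> \<Phi>" using refl_perm by blast
lemma neg_in: "a \<in> \<Phi> \<Longrightarrow> - a \<in> \<Phi>" using refl_in[of a a] refl_self[OF nz] by simp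

lemma Ng_iff: "b \<in> Ng \<longleftrightarrow> b \<in> \<Phi> \<and> - b \<in> P"
proof
  assume "b \<in> Ng"
  then obtain p where p: "p \<in> P" "b = - p" unfolding neg_roots_def by blast
  have "p \<in> \<Phi>" using p(1) unfolding pos_roots_def by blast
  thus "b \<in> \<Phi> \<and> - b \<in> P" using p neg_in by simp
next
  assume "b \<in> \<Phi> \<and> - b \<in> P"
  hence "- (- b) \<in> uminus ` P" by blast
  thus "b \<in> Ng" unfolding neg_roots_def by simp
qed
lemma P_sub: "b \<in> P \<Longrightarrow> b \<in> \<Phi>" by (simp add: pos_roots_def)
lemma P_intro: "b \<in> \<Phi> \<Longrightarrow> (\<forall>\<gamma>\<in>\<Delta>. c \<gamma> \<ge> 0) \<Longrightarrow> b = (\<Sum>\<gamma>\<in>\<Delta>. c \<gamma> *\<^sub>R \<gamma>) \<Longrightarrow> b \<in> P"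
  unfolding pos_roots_def by blast

definition ht :: "'a \<Rightarrow> real" where "ht = (SOME g. linear g \<and> (\<forall>x\<in>\<Delta>. g x = 1))"
lemma ht: "linear ht" "x \<in> \<Delta> \<Longrightarrow> ht x = 1"
proof -
  obtain g where g: "linear g" "\<forall>x\<in>\<Delta>. g x = (\<lambda>_. 1::real) x"
    using linear_independent_extend[OF Dind, of "\<lambda>_. 1::real"] by auto
  have "\<exists>g. linear g \<and> (\<forall>x\<in>\<Delta>. g x = (1::real))" using g by auto
  hence "linear ht \<and> (\<forall>x\<in>\<Delta>. ht x = 1)" unfolding ht_def by (rule someI_ex)
  thus "linear ht" "x \<in> \<Delta> \<Longrightarrow> ht x = 1" by auto
qed

lemma ht_sum: "ht (\<Sum>\<gamma>\<in>\<Delta>. c \<gamma> *\<^sub>R \<gamma>) = (\<Sum>\<gamma>\<in>\<Delta>. c \<gamma>)"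
  by (simp add: linear_sum[OF ht(1)] linear_scale[OF ht(1)] ht(2))

lemma ht_pos: "b \<in> P \<Longrightarrow> ht b \<ge> 0"
  unfolding pos_roots_def using ht_sum by (auto intro!: sum_nonneg)

lemma P_disj: "b \<in> P \<Longrightarrow> - b \<notin> P"
proof
  assume b: "b \<in> P" and nb: "- b \<in> P"
  then obtain c where c: "\<forall>\<gamma>\<in>\<Delta>. c \<gamma> \<ge> 0" "b = (\<Sum>\<gamma>\<in>\<Delta>. c \<gamma> *\<^sub>R \<gamma>)" unfolding pos_roots_def by blast
  have "ht (- b) = - ht b" using linear_neg[OF ht(1)] by simp
  with ht_pos[OF b] ht_pos[OF nb] have "ht b = 0" by simp
  hence "(\<Sum>\<gamma>\<in>\<Delta>. c \<gamma>) = 0" using c ht_sum by simp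
  hence "\<forall>\<gamma>\<in>\<Delta>. c \<gamma> = 0" using sum_nonneg_eq_0_iff[OF finD] c(1) by blast
  hence "b = 0" using c(2) by simp
  thus False using b P_sub zero_notin by blast
qed

lemma P_cover: "b \<in> \<Phi> \<Longrightarrow> b \<in> P \<or> - b \<in> P"
proof -
  assume b: "b \<in> \<Phi>"
  from decomp[OF b] obtain c where c: "b = (\<Sum>\<gamma>\<in>\<Delta>. c \<gamma> *\<^sub>R \<gamma>)" "(\<forall>\<gamma>\<in>\<Delta>. c \<gamma> \<ge> 0) \<or> (\<forall>\<gamma>\<in>\<Delta>. c \<gamma> \<le> 0)" by blast
  show ?thesis
  proof (cases "\<forall>\<gamma>\<in>\<Delta>. c \<gamma> \<ge> 0")
    case True thus ?thesis using P_intro[OF b True c(1)] by simp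
  next
    case False
    hence "\<forall>\<gamma>\<in>\<Delta>. - c \<gamma> \<ge> 0" using c by auto
    moreover have "- b = (\<Sum>\<gamma>\<in>\<Delta>. (- c \<gamma>) *\<^sub>R \<gamma>)" using c(1) by (simp add: sum_negf)
    ultimately have "- b \<in> P" by (rule P_intro[OF neg_in[OF b]])
    thus ?thesis by simp
  qed
qed

lemma D_P: "d \<in> \<Delta> \<Longrightarrow> d \<in> P"
proof (rule P_intro[where c="\<lambda>g. if g = d then 1 else 0"])
  assume d: "d \<in> \<Delta>"
  show "d \<in> \<Phi>" using d Dsub by blast
  show "\<forall>\<gamma>\<in>\<Delta>. 0 \<le> (if \<gamma> = d then 1 else (0::real))" by simp
  have "(\<Sum>\<gamma>\<in>\<Delta>. (if \<gamma> = d then 1 else 0) *\<^sub>R \<gamma>) = (\<Sum>\<gamma>\<in>\<Delta>. (if \<gamma> = d then d else 0))"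
    by (rule sum.cong) auto
  also have "\<dots> = d" using d finD by (simp add: sum.delta)
  finally show "d = (\<Sum>\<gamma>\<in>\<Delta>. (if \<gamma> = d then 1 else 0) *\<^sub>R \<gamma>)" by simp
qed

lemma P_add: "a \<in> P \<Longrightarrow> b \<in> P \<Longrightarrow> a + b \<in> \<Phi> \<Longrightarrow> a + b \<in> P"
proof -
  assume a: "a \<in> P" and b: "b \<in> P" and ab: "a + b \<in> \<Phi>"
  obtain c where c: "\<forall>\<gamma>\<in>\<Delta>. c \<gamma> \<ge> 0" "a = (\<Sum>\<gamma>\<in>\<Delta>. c \<gamma> *\<^sub>R \<gamma>)" using a unfolding pos_roots_def by blast
  obtain d where d: "\<forall>\<gamma>\<in>\<Delta>. d \<gamma> \<ge> 0" "b = (\<Sum>\<gamma>\<in>\<Delta>. d \<gamma> *\<^sub>R \<gamma>)" using b unfolding pos_roots_def by blast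
  show ?thesis
    by (rule P_intro[OF ab, where c="\<lambda>g. c g + d g"]) (use c d in \<open>auto simp: scaleR_add_left sum.distrib\<close>)
qed

lemma ip_cases: assumes "a \<in> \<Phi>" "b \<in> \<Phi>"
  shows "b \<bullet> a = -2 \<or> b \<bullet> a = -1 \<or> b \<bullet> a = 0 \<or> b \<bullet> a = 1 \<or> b \<bullet> a = 2"
proof -
  obtain k :: int where k: "b \<bullet> a = of_int k" using ip_int[OF assms] Ints_cases by metis
  have "0 \<le> (b - a) \<bullet> (b - a)" by simp
  hence "b \<bullet> a \<le> 2" using norm2[OF assms(1)] norm2[OF assms(2)] by (simp add: inner_diff_left inner_diff_right inner_commute)
  moreover have "0 \<le> (b + a) \<bullet> (b + a)" by simp
  hence "b \<bullet> a \<ge> -2" using norm2[OF assms(1)] norm2[OF assms(2)] by (simp add: inner_add_left inner_add_right inner_commute)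
  ultimately have "k \<le> 2" "k \<ge> -2" using k by linarith+
  hence "k = -2 \<or> k = -1 \<or> k = 0 \<or> k = 1 \<or> k = 2" by linarith
  thus ?thesis using k by auto
qed

lemma ip2: assumes "a \<in> \<Phi>" "b \<in> \<Phi>" "b \<bullet> a = 2" shows "b = a"
proof -
  have "(b - a) \<bullet> (b - a) = b \<bullet> b - 2 * (b \<bullet> a) + a \<bullet> a"
    by (simp add: inner_diff_left inner_diff_right inner_commute[of a b])
  hence "(b - a) \<bullet> (b - a) = 0" using assms(3) norm2[OF assms(1)] norm2[OF assms(2)] by simp
  thus ?thesis by simp
qed

lemma ipm2: assumes "a \<in> \<Phi>" "b \<in> \<Phi>" "b \<bullet> a = -2" shows "b = - a"
proof -
  have "(b + a) \<bullet> (b + a) = b \<bullet> b + 2 * (b \<bullet> a) + a \<bullet> a"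
    by (simp add: inner_add_left inner_add_right inner_commute[of a b])
  hence "(b + a) \<bullet> (b + a) = 0" using assms(3) norm2[OF assms(1)] norm2[OF assms(2)] by simp
  thus ?thesis by (simp add: eq_neg_iff_add_eq_0)
qed

lemma simple_perm: assumes d: "d \<in> \<Delta>" and b: "b \<in> P" and bd: "b \<noteq> d"
  shows "refl d b \<in> P"
proof (rule ccontr)
  assume nP: "refl d b \<notin> P"
  have dP: "d \<in> \<Phi>" using d Dsub by blast
  have bP: "b \<in> \<Phi>" using b P_sub by blast
  have rb: "refl d b \<in> \<Phi>" using refl_in[OF dP bP] .
  hence "- refl d b \<in> P" using P_cover nP by blast
  then obtain e where e: "\<forall>\<gamma>\<in>\<Delta>. e \<gamma> \<ge> 0" "- refl d b = (\<Sum>\<gamma>\<in>\<Delta>. e \<gamma> *\<^sub>R \<gamma>)" unfolding pos_roots_def by blast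
  obtain c where c: "\<forall>\<gamma>\<in>\<Delta>. c \<gamma> \<ge> 0" "b = (\<Sum>\<gamma>\<in>\<Delta>. c \<gamma> *\<^sub>R \<gamma>)" using b unfolding pos_roots_def by blast
  let ?k = "b \<bullet> d"
  have "- refl d b = ?k *\<^sub>R d - b" using refl_root[OF dP] by simp
  hence s1: "(\<Sum>\<gamma>\<in>\<Delta>. e \<gamma> *\<^sub>R \<gamma>) = ?k *\<^sub>R d - (\<Sum>\<gamma>\<in>\<Delta>. c \<gamma> *\<^sub>R \<gamma>)" by (simp only: e(2)[symmetric] c(2)[symmetric])
  have s2: "(\<Sum>\<gamma>\<in>\<Delta>. (if \<gamma> = d then ?k else 0) *\<^sub>R \<gamma>) = ?k *\<^sub>R d"
  proof -
    have "(\<Sum>\<gamma>\<in>\<Delta>. (if \<gamma> = d then ?k else 0) *\<^sub>R \<gamma>) = (\<Sum>\<gamma>\<in>\<Delta>. (if \<gamma> = d then ?k *\<^sub>R d else 0))"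
      by (rule sum.cong) auto
    also have "\<dots> = ?k *\<^sub>R d" using d finD by (simp add: sum.delta)
    finally show ?thesis .
  qed
  have "(\<Sum>\<gamma>\<in>\<Delta>. (c \<gamma> + e \<gamma> - (if \<gamma> = d then ?k else 0)) *\<^sub>R \<gamma>)
     = (\<Sum>\<gamma>\<in>\<Delta>. c \<gamma> *\<^sub>R \<gamma>) + (\<Sum>\<gamma>\<in>\<Delta>. e \<gamma> *\<^sub>R \<gamma>) - (\<Sum>\<gamma>\<in>\<Delta>. (if \<gamma> = d then ?k else 0) *\<^sub>R \<gamma>)"
    by (simp only: scaleR_add_left scaleR_diff_left sum.distrib sum_subtractf)
  hence "(\<Sum>\<gamma>\<in>\<Delta>. (c \<gamma> + e \<gamma> - (if \<gamma> = d then ?k else 0)) *\<^sub>R \<gamma>) = 0"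
    using s1 s2 by simp
  hence z: "\<And>g. g \<in> \<Delta> \<Longrightarrow> c g + e g - (if g = d then ?k else 0) = 0" by (rule Dind0)
  have "\<And>g. g \<in> \<Delta> \<Longrightarrow> g \<noteq> d \<Longrightarrow> c g = 0"
  proof -
    fix g assume g: "g \<in> \<Delta>" "g \<noteq> d"
    have "c g + e g = 0" using z[OF g(1)] g(2) by simp
    thus "c g = 0" using c(1) e(1) g(1) by (meson add_nonneg_eq_0_iff)
  qed
  hence "(\<Sum>\<gamma>\<in>\<Delta> - {d}. c \<gamma> *\<^sub>R \<gamma>) = 0" by (intro sum.neutral) auto
  moreover have "b = c d *\<^sub>R d + (\<Sum>\<gamma>\<in>\<Delta> - {d}. c \<gamma> *\<^sub>R \<gamma>)" using c(2) sum.remove[OF finD d, of "\<lambda>\<gamma>. c \<gamma> *\<^sub>R \<gamma>"] by simp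
  ultimately have bb: "b = c d *\<^sub>R d" by simp
  have "c d *\<^sub>R d \<in> \<Phi>" using bP unfolding bb .
  hence "c d = 1 \<or> c d = -1" by (rule reduced[OF dP])
  thus False
  proof
    assume "c d = 1" thus False using \<open>b = c d *\<^sub>R d\<close> bd by simp
  next
    assume "c d = -1" hence "- b = d" using \<open>b = c d *\<^sub>R d\<close> by simp
    thus False using P_disj[OF b] D_P[OF d] by simp
  qed
qed

end



lemma refl_neg: "refl (- a) = refl (a::'a::real_inner)"
  by (rule ext) (simp add: refl_def)

context RS begin

lemma rp_img: "set xs \<subseteq> \<Phi> \<Longrightarrow> refl_prod xs ` \<Phi> = \<Phi>"
proof (induction xs)
  case Nil thus ?case by simp
next
  case (Cons x xs)
  hence "refl_prod xs ` \<Phi> = \<Phi>" "x \<in> \<Phi>" by auto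
  have "refl_prod (x#xs) ` \<Phi> = refl x ` (refl_prod xs ` \<Phi>)" by (simp only: rp_Cons image_comp)
  thus ?case using \<open>refl_prod xs ` \<Phi> = \<Phi>\<close> refl_perm[OF \<open>x \<in> \<Phi>\<close>] by simp
qed

lemma rp_inv1: "set xs \<subseteq> \<Phi> \<Longrightarrow> refl_prod (rev xs) \<circ> refl_prod xs = id"
proof (induction xs)
  case Nil thus ?case by simp
next
  case (Cons x xs)
  have ih: "refl_prod (rev xs) \<circ> refl_prod xs = id" by (rule Cons.IH) (use Cons.prems in simp)
  have x: "x \<in> \<Phi>" using Cons.prems by simp
  have ih': "\<And>v. refl_prod (rev xs) (refl_prod xs v) = v" using ih by (simp add: fun_eq_iff)
  show ?case using ih' refl_refl[OF nz[OF x]] by (simp add: fun_eq_iff rp_append)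
qed

lemma rp_inv2: "set xs \<subseteq> \<Phi> \<Longrightarrow> refl_prod xs \<circ> refl_prod (rev xs) = id"
  using rp_inv1[of "rev xs"] by simp

lemma rp_mem: "set xs \<subseteq> \<Phi> \<Longrightarrow> (g \<in> refl_prod xs ` S) = (refl_prod (rev xs) g \<in> S)"
proof
  assume xs: "set xs \<subseteq> \<Phi>"
  {
    assume "g \<in> refl_prod xs ` S"
    then obtain s where s: "s \<in> S" "g = refl_prod xs s" by blast
    have "refl_prod (rev xs) g = s" using s(2) rp_inv1[OF xs] by (simp add: fun_eq_iff)
    thus "refl_prod (rev xs) g \<in> S" using s by simp
  }
  {
    assume "refl_prod (rev xs) g \<in> S"
    moreover have "g = refl_prod xs (refl_prod (rev xs) g)" using rp_inv2[OF xs] by (simp add: fun_eq_iff)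
    ultimately show "g \<in> refl_prod xs ` S" by blast
  }
qed

lemma rp_in: "set xs \<subseteq> \<Phi> \<Longrightarrow> g \<in> \<Phi> \<Longrightarrow> refl_prod xs g \<in> \<Phi>"
  using rp_img by blast

lemma rp_inner: "set xs \<subseteq> \<Phi> \<Longrightarrow> refl_prod xs u \<bullet> refl_prod xs v = u \<bullet> v"
proof (induction xs)
  case Nil thus ?case by simp
next
  case (Cons x xs)
  hence "x \<in> \<Phi>" "set xs \<subseteq> \<Phi>" by auto
  thus ?case using Cons.IH refl_inner[OF nz[OF \<open>x \<in> \<Phi>\<close>]] by simp
qed

lemma refl_refl_comp: "x \<in> \<Phi> \<Longrightarrow> refl x \<circ> refl x = id"
  using refl_refl[OF nz] by (simp add: fun_eq_iff)

lemma exch: "set xs \<subseteq> \<Delta> \<Longrightarrow> g \<in> P \<Longrightarrow> refl_prod (rev xs) g \<in> Ng \<Longrightarrow>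
   \<exists>ys. set ys \<subseteq> \<Delta> \<and> length ys < length xs \<and> refl g \<circ> refl_prod xs = refl_prod ys"
proof (induction xs arbitrary: g)
  case Nil thus ?case using Ng_iff P_disj by simp
next
  case (Cons x xs)
  have x: "x \<in> \<Delta>" and xs: "set xs \<subseteq> \<Delta>" using Cons.prems by auto
  have xP: "x \<in> \<Phi>" using x Dsub by blast
  show ?case
  proof (cases "g = x")
    case True
    have "refl g \<circ> refl_prod (x#xs) = refl_prod xs"
      using True refl_refl[OF nz[OF xP]] by (simp add: fun_eq_iff)
    moreover have "length xs < length (x#xs)" by simp
    ultimately show ?thesis using xs by blast
  next
    case False
    have g': "refl x g \<in> P" using simple_perm[OF x Cons.prems(2) False] .
    have "refl_prod (rev xs) (refl x g) \<in> Ng" using Cons.prems(3) by (simp add: rp_append)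
    from Cons.IH[OF xs g' this] obtain ys where ys: "set ys \<subseteq> \<Delta>" "length ys < length xs"
      "refl (refl x g) \<circ> refl_prod xs = refl_prod ys" by blast
    have "refl g = refl (refl x (refl x g))" using refl_refl[OF nz[OF xP]] by simp
    also have "\<dots> = refl x \<circ> refl (refl x g) \<circ> refl x" by (rule refl_conj[OF nz[OF xP]])
    finally have "refl g \<circ> refl_prod (x#xs) = refl x \<circ> refl (refl x g) \<circ> (refl x \<circ> refl x) \<circ> refl_prod xs"
      by (simp add: comp_assoc)
    also have "\<dots> = refl_prod (x # ys)" using refl_refl[OF nz[OF xP]] ys(3) by (simp add: fun_eq_iff)
    finally have "refl g \<circ> refl_prod (x#xs) = refl_prod (x # ys)" .
    moreover have "set (x#ys) \<subseteq> \<Delta>" "length (x#ys) < length (x#xs)" using ys x by auto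
    ultimately show ?thesis by blast
  qed
qed

definition Nset :: "('a \<Rightarrow> 'a) \<Rightarrow> 'a set" where "Nset u = P \<inter> u ` Ng"

lemma Nset_mem: "set xs \<subseteq> \<Phi> \<Longrightarrow> g \<in> Nset (refl_prod xs) \<longleftrightarrow> g \<in> P \<and> refl_prod (rev xs) g \<in> Ng"
  unfolding Nset_def using rp_mem by blast

lemma Nset_fin: "finite (Nset u)"
  unfolding Nset_def using finPhi P_sub by (meson Int_lower1 finite_subset subsetI)

lemma card_step: assumes xs: "set xs \<subseteq> \<Phi>" and d: "d \<in> \<Delta>" and nd: "d \<notin> Nset (refl_prod xs)"
  shows "card (Nset (refl_prod (d#xs))) = Suc (card (Nset (refl_prod xs)))"
proof -
  let ?v = "refl_prod (rev xs)"
  have dP: "d \<in> \<Phi>" using d Dsub by blast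
  have dxs: "set (d#xs) \<subseteq> \<Phi>" using xs dP by simp
  have rv: "set (rev xs) \<subseteq> \<Phi>" using xs by simp
  have lin: "linear ?v" by (rule rp_linear)
  have vneg: "\<And>y. ?v (- y) = - ?v y" using linear_neg[OF lin] by simp
  have revd: "\<And>y. refl_prod (rev (d#xs)) y = ?v (refl d y)" by (simp add: rp_append)
  have dPos: "d \<in> P" using D_P[OF d] .
  have vd: "?v d \<in> \<Phi>" using rp_in[OF rv dP] .
  have "?v d \<notin> Ng" using nd dPos Nset_mem[OF xs] by blast
  hence "- ?v d \<notin> P" using Ng_iff vd by blast
  hence vdP: "?v d \<in> P" using P_cover[OF vd] by blast
  have eq: "Nset (refl_prod (d#xs)) = insert d (refl d ` Nset (refl_prod xs))"
  proof (rule set_eqI)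
    fix g
    show "g \<in> Nset (refl_prod (d#xs)) \<longleftrightarrow> g \<in> insert d (refl d ` Nset (refl_prod xs))"
    proof
      assume g: "g \<in> Nset (refl_prod (d#xs))"
      hence gP: "g \<in> P" and gN: "?v (refl d g) \<in> Ng" using Nset_mem[OF dxs] revd by auto
      show "g \<in> insert d (refl d ` Nset (refl_prod xs))"
      proof (cases "g = d")
        case True thus ?thesis by simp
      next
        case False
        hence "refl d g \<in> P" using simple_perm[OF d gP] by blast
        hence "refl d g \<in> Nset (refl_prod xs)" using gN Nset_mem[OF xs] by blast
        moreover have "g = refl d (refl d g)" using refl_refl[OF nz[OF dP]] by simp
        ultimately show ?thesis by blast
      qed
    next
      assume g: "g \<in> insert d (refl d ` Nset (refl_prod xs))"
      show "g \<in> Nset (refl_prod (d#xs))"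
      proof (cases "g = d")
        case True
        have "?v (refl d d) = - ?v d" using refl_self[OF nz[OF dP]] vneg by simp
        moreover have "- ?v d \<in> Ng" using Ng_iff vdP neg_in[OF vd] by simp
        ultimately show ?thesis using True Nset_mem[OF dxs] revd dPos by simp
      next
        case False
        then obtain h where h: "h \<in> Nset (refl_prod xs)" "g = refl d h" using g by blast
        have hP: "h \<in> P" and hN: "?v h \<in> Ng" using h(1) Nset_mem[OF xs] by auto
        have "h \<noteq> d" using h(1) nd by blast
        hence "g \<in> P" using simple_perm[OF d hP] h(2) by simp
        moreover have "refl d g = h" using h(2) refl_refl[OF nz[OF dP]] by simp
        ultimately show ?thesis using hN Nset_mem[OF dxs] revd by simp
      qed
    qed
  qed
  have "d \<notin> refl d ` Nset (refl_prod xs)"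
  proof
    assume "d \<in> refl d ` Nset (refl_prod xs)"
    then obtain h where h: "h \<in> Nset (refl_prod xs)" "d = refl d h" by blast
    from h(2) have "refl d d = refl d (refl d h)" by (rule arg_cong[of _ _ "refl d"])
    hence "h = refl d d" using refl_refl[OF nz[OF dP]] by simp
    hence "h = - d" using refl_self[OF nz[OF dP]] by simp
    moreover have "h \<in> P" using h(1) Nset_def by simp
    ultimately show False using P_disj[OF dPos] by simp
  qed
  moreover have "inj_on (refl d) (Nset (refl_prod xs))"
    by (rule inj_on_inverseI[where g="refl d"]) (simp add: refl_refl[OF nz[OF dP]])
  ultimately show ?thesis unfolding eq using Nset_fin by (simp add: card_image)
qed

lemma Nset_id: "Nset id = {}"
  unfolding Nset_def using Ng_iff P_disj by auto

lemma L: "set xs \<subseteq> \<Delta> \<Longrightarrow> card (Nset (refl_prod xs)) = length xs \<or>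
   (\<exists>ys. set ys \<subseteq> \<Delta> \<and> length ys < length xs \<and> refl_prod ys = refl_prod xs)"
proof (induction xs)
  case Nil thus ?case using Nset_id by (simp add: id_def)
next
  case (Cons x xs)
  have x: "x \<in> \<Delta>" and xs: "set xs \<subseteq> \<Delta>" using Cons.prems by auto
  have xsP: "set xs \<subseteq> \<Phi>" using xs Dsub by blast
  from Cons.IH[OF xs] show ?case
  proof
    assume c: "card (Nset (refl_prod xs)) = length xs"
    show ?case
    proof (cases "x \<in> Nset (refl_prod xs)")
      case True
      hence "x \<in> P" "refl_prod (rev xs) x \<in> Ng" using Nset_mem[OF xsP] by auto
      from exch[OF xs this] obtain ys where "set ys \<subseteq> \<Delta>" "length ys < length xs" "refl x \<circ> refl_prod xs = refl_prod ys" by blast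
      thus ?thesis by (intro disjI2 exI[of _ ys]) auto
    next
      case False
      from card_step[OF xsP x False] c show ?thesis by (simp add: o_def)
    qed
  next
    assume "\<exists>ys. set ys \<subseteq> \<Delta> \<and> length ys < length xs \<and> refl_prod ys = refl_prod xs"
    then obtain ys where "set ys \<subseteq> \<Delta>" "length ys < length xs" "refl_prod ys = refl_prod xs" by blast
    thus ?case using x by (intro disjI2 exI[of _ "x#ys"]) auto
  qed
qed

end



context RS begin

lemma gen_pos: "b \<in> P \<Longrightarrow> \<exists>ys. set ys \<subseteq> \<Delta> \<and> refl b = refl_prod ys"
proof (induction "nat \<lfloor>ht b\<rfloor>" arbitrary: b rule: less_induct)
  case less
  have bP: "b \<in> \<Phi>" using less.prems P_sub by blast
  obtain c where c: "\<forall>\<gamma>\<in>\<Delta>. c \<gamma> \<ge> 0" "b = (\<Sum>\<gamma>\<in>\<Delta>. c \<gamma> *\<^sub>R \<gamma>)" using less.prems unfolding pos_roots_def by blast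
  have "b \<bullet> (\<Sum>\<gamma>\<in>\<Delta>. c \<gamma> *\<^sub>R \<gamma>) = (\<Sum>\<gamma>\<in>\<Delta>. c \<gamma> * (b \<bullet> \<gamma>))" by (simp add: inner_sum_right)
  hence bb: "(\<Sum>\<gamma>\<in>\<Delta>. c \<gamma> * (b \<bullet> \<gamma>)) = 2" using c(2) norm2[OF bP] by simp
  obtain d where d: "d \<in> \<Delta>" "b \<bullet> d > 0"
  proof (rule ccontr)
    assume "\<not> thesis"
    hence "\<forall>\<gamma>\<in>\<Delta>. b \<bullet> \<gamma> \<le> 0" using that by force
    hence "(\<Sum>\<gamma>\<in>\<Delta>. c \<gamma> * (b \<bullet> \<gamma>)) \<le> 0" using c(1) by (intro sum_nonpos) (simp add: mult_nonneg_nonpos)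
    thus False using bb by simp
  qed
  have dP: "d \<in> \<Phi>" using d Dsub by blast
  show ?case
  proof (cases "b = d")
    case True
    hence "refl b = refl_prod [d]" by simp
    thus ?thesis using d by (intro exI[of _ "[d]"]) simp
  next
    case False
    obtain m :: int where m: "b \<bullet> d = of_int m" using ip_int[OF dP bP] Ints_cases by metis
    have m1: "m \<ge> 1" using m d(2) by simp
    let ?b' = "refl d b"
    have b'P: "?b' \<in> P" by (rule simple_perm[OF d(1) less.prems False])
    have "?b' = b - of_int m *\<^sub>R d" using refl_root[OF dP] m by simp
    hence "ht ?b' = ht b - of_int m" using linear_diff[OF ht(1)] linear_scale[OF ht(1)] ht(2)[OF d(1)] by simp
    hence fl: "\<lfloor>ht ?b'\<rfloor> = \<lfloor>ht b\<rfloor> - m" by simp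
    have "\<lfloor>ht ?b'\<rfloor> \<ge> 0" using ht_pos[OF b'P] by simp
    hence "nat \<lfloor>ht ?b'\<rfloor> < nat \<lfloor>ht b\<rfloor>" using fl m1 by linarith
    from less.hyps[OF this b'P] obtain ys where ys: "set ys \<subseteq> \<Delta>" "refl ?b' = refl_prod ys" by blast
    have "refl b = refl (refl d ?b')" using refl_refl[OF nz[OF dP]] by simp
    also have "\<dots> = refl d \<circ> refl ?b' \<circ> refl d" by (rule refl_conj[OF nz[OF dP]])
    also have "\<dots> = refl_prod ([d] @ ys @ [d])" using ys(2) by (simp add: rp_append comp_assoc)
    finally show ?thesis using ys(1) d(1) by (intro exI[of _ "[d] @ ys @ [d]"]) simp
  qed
qed

lemma gen_root: "b \<in> \<Phi> \<Longrightarrow> \<exists>ys. set ys \<subseteq> \<Delta> \<and> refl b = refl_prod ys"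
  using P_cover gen_pos refl_neg by metis

lemma gen: "w \<in> weyl_group \<Phi> \<Longrightarrow> \<exists>ys. set ys \<subseteq> \<Delta> \<and> w = refl_prod ys"
proof -
  assume "w \<in> weyl_group \<Phi>"
  then obtain xs where xs: "set xs \<subseteq> \<Phi>" "w = refl_prod xs" unfolding weyl_group_def by blast
  have "\<exists>ys. set ys \<subseteq> \<Delta> \<and> refl_prod xs = refl_prod ys" using xs(1)
  proof (induction xs)
    case Nil thus ?case by (intro exI[of _ "[]"]) simp
  next
    case (Cons x xs)
    then obtain ys where ys: "set ys \<subseteq> \<Delta>" "refl_prod xs = refl_prod ys" by auto
    have "x \<in> \<Phi>" using Cons.prems by simp
    then obtain zs where zs: "set zs \<subseteq> \<Delta>" "refl x = refl_prod zs" using gen_root by blast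
    have "refl_prod (x#xs) = refl_prod (zs @ ys)" using ys zs by (simp add: rp_append)
    thus ?case using ys zs by (intro exI[of _ "zs @ ys"]) simp
  qed
  thus ?thesis using xs by simp
qed

lemma len: assumes "w \<in> weyl_group \<Phi>" shows "weyl_length \<Delta> w = card (Nset w)"
proof -
  obtain ys where ys: "set ys \<subseteq> \<Delta>" "w = refl_prod ys" using gen[OF assms] by blast
  let ?Q = "\<lambda>n. \<exists>xs. set xs \<subseteq> \<Delta> \<and> length xs = n \<and> w = refl_prod xs"
  have ex: "?Q (length ys)" using ys by blast
  have wl: "weyl_length \<Delta> w = (LEAST n. ?Q n)" unfolding weyl_length_def ..
  from LeastI_ex[of ?Q] ex obtain xs where xs: "set xs \<subseteq> \<Delta>" "length xs = (LEAST n. ?Q n)" "w = refl_prod xs" by blast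
  from L[OF xs(1)] show ?thesis
  proof
    assume "card (Nset (refl_prod xs)) = length xs" thus ?thesis using xs wl by simp
  next
    assume "\<exists>zs. set zs \<subseteq> \<Delta> \<and> length zs < length xs \<and> refl_prod zs = refl_prod xs"
    then obtain zs where zs: "set zs \<subseteq> \<Delta>" "length zs < length xs" "refl_prod zs = refl_prod xs" by blast
    have "?Q (length zs)" using zs xs(3) by auto
    hence "(LEAST n. ?Q n) \<le> length zs" by (rule Least_le)
    thus ?thesis using zs(2) xs(2) by simp
  qed
qed

end



context RS begin

lemma main:
  fixes w :: "'a \<Rightarrow> 'a" and \<alpha> :: 'a
  assumes wW: "w \<in> weyl_group \<Phi>"
    and aN: "\<alpha> \<in> P \<inter> w ` Ng"
    and lenA: "weyl_length \<Delta> (refl \<alpha> \<circ> w) = weyl_length \<Delta> w - 1"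
  shows "bij_betw
           (\<lambda>\<beta>. if \<beta> \<bullet> \<alpha> = 1 \<and> \<beta> - \<alpha> \<in> P \<and> \<beta> - \<alpha> \<notin> P \<inter> w ` Ng then \<beta> - \<alpha> else \<beta>)
           ((P \<inter> w ` Ng) - {\<alpha>})
           (P \<inter> (refl \<alpha> \<circ> w) ` Ng)
         \<and> (inv w \<alpha> \<in> uminus ` \<Delta> \<longrightarrow> P \<inter> (refl \<alpha> \<circ> w) ` Ng = (P \<inter> w ` Ng) - {\<alpha>})"
proof -
  obtain ws where ws: "set ws \<subseteq> \<Phi>" "w = refl_prod ws" using wW unfolding weyl_group_def by blast
  have aP: "\<alpha> \<in> P" and aPhi: "\<alpha> \<in> \<Phi>" using aN P_sub by auto
  have aws: "set (\<alpha>#ws) \<subseteq> \<Phi>" using ws aPhi by simp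
  have sw: "refl \<alpha> \<circ> w = refl_prod (\<alpha>#ws)" using ws by simp
  have swW: "refl \<alpha> \<circ> w \<in> weyl_group \<Phi>" unfolding weyl_group_def sw using aws by blast
  define v where "v = refl_prod (rev ws)"
  have rws: "set (rev ws) \<subseteq> \<Phi>" using ws by simp
  have vlin: "linear v" unfolding v_def by (rule rp_linear)
  have vin: "\<And>g. g \<in> \<Phi> \<Longrightarrow> v g \<in> \<Phi>" unfolding v_def using rp_in[OF rws] .
  have vneg: "\<And>y. v (- y) = - v y" using linear_neg[OF vlin] by simp
  have vadd: "\<And>x y. v (x + y) = v x + v y" using linear_add[OF vlin] by simp
  have vdiff: "\<And>x y. v (x - y) = v x - v y" using linear_diff[OF vlin] by simp
  define Q where "Q g \<longleftrightarrow> v g \<in> Ng" for g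
  let ?s = "refl \<alpha>"
  have sa: "\<And>g. ?s g = g - (g \<bullet> \<alpha>) *\<^sub>R \<alpha>" using refl_root[OF aPhi] .
  have aa: "\<alpha> \<bullet> \<alpha> = 2" using norm2[OF aPhi] .
  define Nw where "Nw = P \<inter> w ` Ng"
  define Ns where "Ns = P \<inter> (refl \<alpha> \<circ> w) ` Ng"
  have Nw_iff: "\<And>g. g \<in> Nw \<longleftrightarrow> g \<in> P \<and> Q g"
    unfolding Nw_def Q_def v_def using Nset_mem[OF ws(1)] ws(2) Nset_def by simp
  have Ns_iff: "\<And>g. g \<in> Ns \<longleftrightarrow> g \<in> P \<and> Q (?s g)"
  proof -
    fix g
    have "refl_prod (rev (\<alpha>#ws)) g = v (?s g)" unfolding v_def by (simp add: rp_append)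
    thus "g \<in> Ns \<longleftrightarrow> g \<in> P \<and> Q (?s g)"
      unfolding Ns_def Q_def sw using Nset_mem[OF aws] Nset_def by simp
  qed
  have F1: "\<And>g. g \<in> \<Phi> \<Longrightarrow> Q (- g) \<longleftrightarrow> \<not> Q g"
  proof -
    fix g assume g: "g \<in> \<Phi>"
    have vg: "v g \<in> \<Phi>" using vin[OF g] .
    show "Q (- g) \<longleftrightarrow> \<not> Q g" unfolding Q_def vneg Ng_iff
      using vg neg_in[OF vg] P_cover[OF vg] P_disj by auto
  qed
  have F2: "\<And>a b. Q a \<Longrightarrow> Q b \<Longrightarrow> a + b \<in> \<Phi> \<Longrightarrow> Q (a + b)"
  proof -
    fix a b assume qa: "Q a" and qb: "Q b" and ab: "a + b \<in> \<Phi>"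
    have "- v a \<in> P" "- v b \<in> P" using qa qb unfolding Q_def Ng_iff by auto
    moreover have "- v (a + b) \<in> \<Phi>" using neg_in[OF vin[OF ab]] .
    ultimately have "- v (a + b) \<in> P" using P_add[of "- v a" "- v b"] vadd by simp
    thus "Q (a + b)" unfolding Q_def Ng_iff using vin[OF ab] by simp
  qed
  have Qa: "Q \<alpha>" using aN Nw_iff Nw_def by simp
  have finNw: "finite Nw" and finNs: "finite Ns" unfolding Nw_def Ns_def using Nset_fin Nset_def by auto
  have card_rel: "card Ns = card Nw - 1"
    using lenA len[OF wW] len[OF swW] unfolding Ns_def Nw_def Nset_def by simp
  have sPhi: "\<And>g. g \<in> \<Phi> \<Longrightarrow> ?s g \<in> \<Phi>" using refl_in[OF aPhi] .
  have NB: "\<And>\<beta>. \<beta> \<in> Nw \<Longrightarrow> \<beta> \<bullet> \<alpha> = 1 \<Longrightarrow> \<alpha> - \<beta> \<in> Nw \<Longrightarrow> False"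
  proof -
    fix \<beta> assume bN: "\<beta> \<in> Nw" and ba: "\<beta> \<bullet> \<alpha> = 1" and abN: "\<alpha> - \<beta> \<in> Nw"
    have bP: "\<beta> \<in> P" and Qb: "Q \<beta>" using bN Nw_iff by auto
    have abP: "\<alpha> - \<beta> \<in> P" and Qab: "Q (\<alpha> - \<beta>)" using abN Nw_iff by auto
    have aba: "(\<alpha> - \<beta>) \<bullet> \<alpha> = 1" using ba aa by (simp add: inner_diff_left)
    have aNw: "\<alpha> \<in> Nw" using aP Qa Nw_iff by simp
    define B where "B = {\<alpha>, \<beta>, \<alpha> - \<beta>}"
    have BN: "B \<subseteq> Nw" unfolding B_def using aNw bN abN by simp
    have d1: "\<beta> \<noteq> \<alpha>" using ba aa by auto
    have d2: "\<alpha> - \<beta> \<noteq> \<alpha>" using aba aa by auto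
    have d3: "\<alpha> - \<beta> \<noteq> \<beta>"
    proof
      assume "\<alpha> - \<beta> = \<beta>"
      hence "\<alpha> = 2 *\<^sub>R \<beta>" by (simp add: scaleR_2 algebra_simps)
      hence "\<alpha> \<bullet> \<alpha> = 4 * (\<beta> \<bullet> \<beta>)" by simp
      thus False using aa norm2[OF P_sub[OF bP]] by simp
    qed
    have cB: "card B = 3" unfolding B_def using d1 d2 d3 by auto
    define \<phi> where "\<phi> g = (if g \<bullet> \<alpha> = -1 \<and> g \<notin> Nw then g + \<alpha> else g)" for g
    have into: "\<phi> g \<in> Nw - B" if gN: "g \<in> Ns" for g
    proof -
      have gP: "g \<in> P" and Qsg: "Q (?s g)" using gN Ns_iff by auto
      have gPhi: "g \<in> \<Phi>" using P_sub[OF gP] .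
      have notB: "\<And>h. h \<in> B \<Longrightarrow> h \<bullet> \<alpha> = 1 \<or> h \<bullet> \<alpha> = 2" unfolding B_def using ba aba aa by auto
      from ip_cases[OF aPhi gPhi] show ?thesis
      proof (elim disjE)
        assume "g \<bullet> \<alpha> = -2"
        hence "g = - \<alpha>" using ipm2[OF aPhi gPhi] by simp
        thus ?thesis using gP P_disj[OF aP] by simp
      next
        assume "g \<bullet> \<alpha> = 2"
        hence "g = \<alpha>" using ip2[OF aPhi gPhi] by simp
        hence "Q (- \<alpha>)" using Qsg refl_self[OF nz[OF aPhi]] by simp
        thus ?thesis using F1[OF aPhi] Qa by simp
      next
        assume g0: "g \<bullet> \<alpha> = 0"
        hence "?s g = g" using sa by simp
        hence "g \<in> Nw" using Qsg gP Nw_iff by simp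
        moreover have "g \<notin> B" using notB g0 by force
        ultimately show ?thesis using g0 unfolding \<phi>_def by simp
      next
        assume g1: "g \<bullet> \<alpha> = 1"
        hence sg: "?s g = g - \<alpha>" using sa by simp
        hence Qga: "Q (g - \<alpha>)" using Qsg by simp
        have "Q ((g - \<alpha>) + \<alpha>)" by (rule F2[OF Qga Qa]) (simp add: gPhi)
        hence gNw: "g \<in> Nw" using gP Nw_iff by simp
        have gaPhi: "\<alpha> - g \<in> \<Phi>" using neg_in[OF sPhi[OF gPhi]] sg by simp
        have nQ: "\<not> Q (\<alpha> - g)" using F1[OF gaPhi] Qga by simp
        have "g \<noteq> \<beta>" using nQ Qab by auto
        moreover have "g \<noteq> \<alpha> - \<beta>" using nQ Qb by auto
        moreover have "g \<noteq> \<alpha>" using g1 aa by auto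
        ultimately have "g \<notin> B" unfolding B_def by simp
        thus ?thesis using gNw g1 unfolding \<phi>_def by simp
      next
        assume gm: "g \<bullet> \<alpha> = -1"
        hence sg: "?s g = g + \<alpha>" using sa by simp
        have gaPhi: "g + \<alpha> \<in> \<Phi>" using sPhi[OF gPhi] sg by simp
        show ?thesis
        proof (cases "g \<in> Nw")
          case True
          have "g \<notin> B" using notB gm by force
          thus ?thesis using True unfolding \<phi>_def by simp
        next
          case False
          have "g + \<alpha> \<in> P" using P_add[OF gP aP gaPhi] .
          hence inN: "g + \<alpha> \<in> Nw" using Nw_iff Qsg sg by simp
          have "g + \<alpha> \<noteq> \<alpha>" using gP zero_notin P_sub by auto
          moreover have "g + \<alpha> \<noteq> \<beta>"
          proof
            assume "g + \<alpha> = \<beta>" hence "- g = \<alpha> - \<beta>" by (simp add: algebra_simps)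
            thus False using abP P_disj[OF gP] by simp
          qed
          moreover have "g + \<alpha> \<noteq> \<alpha> - \<beta>"
          proof
            assume "g + \<alpha> = \<alpha> - \<beta>" hence "g + \<beta> = 0" by (simp add: algebra_simps)
            hence "g = - \<beta>" by (simp add: eq_neg_iff_add_eq_0)
            thus False using gP P_disj[OF bP] by simp
          qed
          ultimately have "g + \<alpha> \<notin> B" unfolding B_def by simp
          thus ?thesis using inN False gm unfolding \<phi>_def by simp
        qed
      qed
    qed
    have inj: "inj_on \<phi> Ns"
    proof (rule inj_onI)
      fix g1 g2 assume g1: "g1 \<in> Ns" and g2: "g2 \<in> Ns" and eq: "\<phi> g1 = \<phi> g2"
      have key: "False" if h1: "h1 \<in> Ns" and h2: "h2 \<in> Ns" and c1: "h1 \<bullet> \<alpha> = -1 \<and> h1 \<notin> Nw"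
          and h2e: "h2 = h1 + \<alpha>" for h1 h2
      proof -
        have "h2 \<bullet> \<alpha> = 1" unfolding h2e using c1 aa by (simp add: inner_add_left)
        hence "?s h2 = h2 - \<alpha>" using sa[of h2] by simp
        hence "?s h2 = h1" unfolding h2e by simp
        moreover have "Q (?s h2)" using h2 Ns_iff by blast
        ultimately have "Q h1" by simp
        moreover have "h1 \<in> P" using h1 Ns_iff by blast
        ultimately have "h1 \<in> Nw" using Nw_iff by blast
        thus False using c1 by blast
      qed
      show "g1 = g2"
      proof (cases "g1 \<bullet> \<alpha> = -1 \<and> g1 \<notin> Nw")
        case c1: True
        show ?thesis
        proof (cases "g2 \<bullet> \<alpha> = -1 \<and> g2 \<notin> Nw")
          case True thus ?thesis using eq c1 unfolding \<phi>_def by simp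
        next
          case False
          have "\<phi> g2 = g2" using False unfolding \<phi>_def by (simp only: if_False)
          moreover have "\<phi> g1 = g1 + \<alpha>" using c1 unfolding \<phi>_def by simp
          ultimately have "g2 = g1 + \<alpha>" using eq by simp
          from key[OF g1 g2 c1 this] show ?thesis ..
        qed
      next
        case c1: False
        show ?thesis
        proof (cases "g2 \<bullet> \<alpha> = -1 \<and> g2 \<notin> Nw")
          case True
          have "\<phi> g1 = g1" using c1 unfolding \<phi>_def by (simp only: if_False)
          moreover have "\<phi> g2 = g2 + \<alpha>" using True unfolding \<phi>_def by simp
          ultimately have "g1 = g2 + \<alpha>" using eq by simp
          from key[OF g2 g1 True this] show ?thesis ..
        next
          case False
          have "\<phi> g1 = g1" using c1 unfolding \<phi>_def by (simp only: if_False)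
          moreover have "\<phi> g2 = g2" using False unfolding \<phi>_def by (simp only: if_False)
          ultimately show ?thesis using eq by metis
        qed
      qed
    qed
    have "card Ns = card (\<phi> ` Ns)" using card_image[OF inj] by simp
    also have "\<dots> \<le> card (Nw - B)" using into finNw by (intro card_mono) auto
    also have "\<dots> = card Nw - 3" using card_Diff_subset[OF _ BN] cB finNw finite_subset[OF BN] by simp
    finally have "card Ns \<le> card Nw - 3" .
    moreover have "card Nw \<ge> 3" using card_mono[OF finNw BN] cB by simp
    ultimately show False using card_rel by simp
  qed
  define \<psi> where "\<psi> = (\<lambda>\<beta>. if \<beta> \<bullet> \<alpha> = 1 \<and> \<beta> - \<alpha> \<in> P \<and> \<beta> - \<alpha> \<notin> P \<inter> w ` Ng then \<beta> - \<alpha> else \<beta>)"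
  have psi_alt: "\<And>b. \<psi> b = (if b \<bullet> \<alpha> = 1 \<and> b - \<alpha> \<in> P \<and> b - \<alpha> \<notin> Nw then b - \<alpha> else b)"
    unfolding \<psi>_def Nw_def by simp
  let ?X = "Nw - {\<alpha>}"
  have aNw: "\<alpha> \<in> Nw" using aP Qa Nw_iff by simp
  have into: "\<psi> b \<in> Ns" if bX: "b \<in> ?X" for b
  proof -
    have bP: "b \<in> P" and Qb: "Q b" and ba: "b \<noteq> \<alpha>" using bX Nw_iff by auto
    have bPhi: "b \<in> \<Phi>" using P_sub[OF bP] .
    show ?thesis
    proof (cases "b \<bullet> \<alpha> = 1 \<and> b - \<alpha> \<in> P \<and> b - \<alpha> \<notin> Nw")
      case True
      hence ps: "\<psi> b = b - \<alpha>" using psi_alt by simp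
      have "(b - \<alpha>) \<bullet> \<alpha> = -1" using True aa by (simp add: inner_diff_left)
      hence "?s (b - \<alpha>) = b" using sa[of "b - \<alpha>"] by simp
      hence "Q (?s (b - \<alpha>))" using Qb by simp
      thus ?thesis using ps True Ns_iff by simp
    next
      case False
      hence ps: "\<psi> b = b" using psi_alt by (simp only: if_False)
      have "Q (?s b)"
        using ip_cases[OF aPhi bPhi]
      proof (elim disjE)
        assume "b \<bullet> \<alpha> = -2"
        hence "b = - \<alpha>" using ipm2[OF aPhi bPhi] by simp
        thus ?thesis using bP P_disj[OF aP] by simp
      next
        assume "b \<bullet> \<alpha> = 2"
        thus ?thesis using ip2[OF aPhi bPhi] ba by simp
      next
        assume "b \<bullet> \<alpha> = 0" thus ?thesis using sa[of b] Qb by simp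
      next
        assume bm: "b \<bullet> \<alpha> = -1"
        hence sb: "?s b = b + \<alpha>" using sa[of b] by simp
        have "Q (b + \<alpha>)" by (rule F2[OF Qb Qa]) (use sPhi[OF bPhi] sb in simp)
        thus ?thesis using sb by simp
      next
        assume b1: "b \<bullet> \<alpha> = 1"
        hence sb: "?s b = b - \<alpha>" using sa[of b] by simp
        have bmPhi: "b - \<alpha> \<in> \<Phi>" using sPhi[OF bPhi] sb by simp
        have "Q (b - \<alpha>)"
        proof (cases "b - \<alpha> \<in> P")
          case True
          hence "b - \<alpha> \<in> Nw" using False b1 by simp
          thus ?thesis using Nw_iff by simp
        next
          case nP: False
          have abP: "\<alpha> - b \<in> P" using P_cover[OF bmPhi] nP by simp
          have "\<not> Q (\<alpha> - b)"
          proof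
            assume "Q (\<alpha> - b)"
            hence "\<alpha> - b \<in> Nw" using abP Nw_iff by simp
            moreover have "b \<in> Nw" using bX by simp
            ultimately show False using NB b1 by blast
          qed
          thus ?thesis using F1[OF bmPhi] by simp
        qed
        thus ?thesis using sb by simp
      qed
      thus ?thesis using ps bP Ns_iff by simp
    qed
  qed
  have inj: "inj_on \<psi> ?X"
  proof (rule inj_onI)
    fix b1 b2 assume b1: "b1 \<in> ?X" and b2: "b2 \<in> ?X" and eq: "\<psi> b1 = \<psi> b2"
    have key: False if h1: "h1 \<in> ?X" and c: "h1 \<bullet> \<alpha> = 1 \<and> h1 - \<alpha> \<in> P \<and> h1 - \<alpha> \<notin> Nw"
      and h2: "h2 \<in> ?X" and e: "h1 - \<alpha> = h2" for h1 h2
      using c h2 e by blast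
    show "b1 = b2"
    proof (cases "b1 \<bullet> \<alpha> = 1 \<and> b1 - \<alpha> \<in> P \<and> b1 - \<alpha> \<notin> Nw")
      case c1: True
      have p1: "\<psi> b1 = b1 - \<alpha>" using c1 psi_alt by simp
      show ?thesis
      proof (cases "b2 \<bullet> \<alpha> = 1 \<and> b2 - \<alpha> \<in> P \<and> b2 - \<alpha> \<notin> Nw")
        case True
        have "\<psi> b2 = b2 - \<alpha>" using True psi_alt by simp
        thus ?thesis using p1 eq by simp
      next
        case False
        have "\<psi> b2 = b2" using False psi_alt by (simp only: if_False)
        hence "b1 - \<alpha> = b2" using p1 eq by metis
        from key[OF b1 c1 b2 this] show ?thesis ..
      qed
    next
      case c1: False
      have p1: "\<psi> b1 = b1" using c1 psi_alt by (simp only: if_False)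
      show ?thesis
      proof (cases "b2 \<bullet> \<alpha> = 1 \<and> b2 - \<alpha> \<in> P \<and> b2 - \<alpha> \<notin> Nw")
        case True
        have "\<psi> b2 = b2 - \<alpha>" using True psi_alt by simp
        hence "b2 - \<alpha> = b1" using p1 eq by metis
        from key[OF b2 True b1 this] show ?thesis ..
      next
        case False
        have "\<psi> b2 = b2" using False psi_alt by (simp only: if_False)
        thus ?thesis using p1 eq by metis
      qed
    qed
  qed
  have cX: "card ?X = card Nw - 1" using aNw finNw by simp
  have sub: "\<psi> ` ?X \<subseteq> Ns" using into by blast
  have "card (\<psi> ` ?X) = card Ns" using card_image[OF inj] cX card_rel by simp
  hence img: "\<psi> ` ?X = Ns" using card_subset_eq[OF finNs sub] by simp
  have bij: "bij_betw \<psi> ?X Ns" unfolding bij_betw_def using inj img by simp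
  have part2: "Ns = ?X" if hyp: "inv w \<alpha> \<in> uminus ` \<Delta>"
  proof -
    have "inv w = v" unfolding ws(2) v_def by (rule inv_unique_comp[OF rp_inv2[OF ws(1)] rp_inv1[OF ws(1)]])
    then obtain d where d: "d \<in> \<Delta>" "v \<alpha> = - d" using hyp by auto
    have dPhi: "d \<in> \<Phi>" using d Dsub by blast
    have id: "\<psi> b = b" if bX: "b \<in> ?X" for b
    proof (rule ccontr)
      assume ne: "\<psi> b \<noteq> b"
      hence c: "b \<bullet> \<alpha> = 1 \<and> b - \<alpha> \<in> P \<and> b - \<alpha> \<notin> Nw" using psi_alt by (metis (full_types))
      have bP: "b \<in> P" and Qb: "Q b" using bX Nw_iff by auto
      have bPhi: "b \<in> \<Phi>" using P_sub[OF bP] .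
      have nQ: "\<not> Q (b - \<alpha>)" using c Nw_iff by simp
      have bmPhi: "b - \<alpha> \<in> \<Phi>" using P_sub c by simp
      have vbm: "v (b - \<alpha>) = v b + d" using vdiff d(2) by simp
      have vbmPhi: "v b + d \<in> \<Phi>" using vin[OF bmPhi] vbm by simp
      have "v b + d \<notin> Ng" using nQ vbm unfolding Q_def by simp
      hence "- (v b + d) \<notin> P" using Ng_iff vbmPhi by simp
      hence pos: "v b + d \<in> P" using P_cover[OF vbmPhi] by simp
      have nvb: "- v b \<in> P" using Qb unfolding Q_def Ng_iff by simp
      have "v b \<bullet> v \<alpha> = b \<bullet> \<alpha>" unfolding v_def by (rule rp_inner[OF rws])
      hence ip: "(- v b) \<bullet> d = 1" using c d(2) by simp
      have "- v b \<noteq> d" using ip norm2[OF dPhi] by auto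
      hence "refl d (- v b) \<in> P" by (rule simple_perm[OF d(1) nvb])
      moreover have "refl d (- v b) = - (v b + d)" using refl_root[OF dPhi, of "- v b"] ip by simp
      ultimately show False using P_disj[OF pos] by simp
    qed
    have "Ns = \<psi> ` ?X" using img by simp
    also have "\<dots> = ?X" using id by (simp add: image_cong)
    finally show ?thesis .
  qed
  show ?thesis using bij part2 unfolding \<psi>_def Nw_def Ns_def by blast
qed

end

theorem mainTheorem15:
  fixes \<Phi> \<Delta> :: "'a::euclidean_space set" and w :: "'a \<Rightarrow> 'a" and \<alpha> :: 'a
  assumes "simply_laced_root_system \<Phi>"
    and "simple_system \<Phi> \<Delta>"
    and "w \<in> weyl_group \<Phi>"
    and "\<alpha> \<in> pos_roots \<Phi> \<Delta> \<inter> w ` neg_roots \<Phi> \<Delta>"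
    and "weyl_length \<Delta> (refl \<alpha> \<circ> w) = weyl_length \<Delta> w - 1"
  shows "bij_betw
           (\<lambda>\<beta>. if \<beta> \<bullet> \<alpha> = 1 \<and> \<beta> - \<alpha> \<in> pos_roots \<Phi> \<Delta>
                    \<and> \<beta> - \<alpha> \<notin> pos_roots \<Phi> \<Delta> \<inter> w ` neg_roots \<Phi> \<Delta>
                 then \<beta> - \<alpha> else \<beta>)
           ((pos_roots \<Phi> \<Delta> \<inter> w ` neg_roots \<Phi> \<Delta>) - {\<alpha>})
           (pos_roots \<Phi> \<Delta> \<inter> (refl \<alpha> \<circ> w) ` neg_roots \<Phi> \<Delta>)
         \<and> (inv w \<alpha> \<in> uminus ` \<Delta> \<longrightarrow>
           pos_roots \<Phi> \<Delta> \<inter> (refl \<alpha> \<circ> w) ` neg_roots \<Phi> \<Delta>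
             = (pos_roots \<Phi> \<Delta> \<inter> w ` neg_roots \<Phi> \<Delta>) - {\<alpha>})"
proof -
  interpret RS \<Phi> \<Delta> using assms(1,2) by unfold_locales
  show ?thesis by (rule main[OF assms(3,4,5)])
qed

end
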